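(* In a pairing heap with $n$ elements, decrease-key takes $O(\log n)$ amortized time with respect to the potential $\Phi$.
   Context: A pairing heap is a heap-ordered rooted ordered tree (the "general view"): each node stores a key, has zero or more children ordered from left to right, and every child has a strictly larger key than its parent. It is stored in the "binary view" via the leftmost-child/right-sibling correspondence: the left child of $x$ in the binary view is the leftmost child of $x$ in the general view, and the right child of $x$ in the binary view is the next sibling to the right of $x$ in the general view. Pairing two heap-ordered trees makes the root with the larger key the leftmost child of the other root. Operations: make-heap returns an empty heap; get-min returns the root key; insert creates a new node, which becomes the root if the heap is empty and otherwise is paired with the root; decrease-key$(p,y)$ (with $y$ strictly less than the current key of the node $p$) sets the key to $y$ and, if the node is not the root, detaches it (with its general-view subtree) from its parent and pairs it with the root; delete-min removes the root, then (first pass) pairs the root's former children in consecutive pairs from left to right, then (second pass) repeatedly pairs the two rightmost remaining trees until one tree remains. The actual cost of an operation is $1$ plus the number of pairings it performs, and its amortized cost is its actual cost plus the resulting change in $\Phi$. The heap is assumed to arise from a sequence of such operations starting from an empty heap. Sticky size: $N$ is initially $1$; after every heap operation, if $n \ge 2N$ then $N$ is doubled, and if $n \le N/2$ then $N$ is halved, where $n$ is the current number of elements. Let $\lg = \log_2$. For a node $x$, $|x|$ is the number of nodes in the subtree rooted at $x$ in the binary view, and $x_L$, $x_R$ are its left and right children in the binary view (a missing child has size $0$). Node potential $\phi_x$: if $|x_L| > \lg N$ and $|x_R| > \lg N$, $x$ is large and $\phi_x = 400 + 100\lg|x|$; if $|x_L| \le \lg N < |x_R|$, $x$ is mixed and $\phi_x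 = 400 + 100\frac{|x_L|}{\lg N}\lg|x|$ (symmetrically, if $|x_R| \le \lg N < |x_L|$, $\phi_x = 400 + 100\frac{|x_R|}{\lg N}\lg|x|$); if both $|x_L|,|x_R| \le \lg N$, $x$ is small and $\phi_x = 0$. Edge potential: an edge of the binary view joining a large node to its right child that is also large has potential $-7$; all other edges have potential $0$. $\Phi = 900|N-n| + \sum_x \phi_x + (\text{sum of edge potentials})$. *)

theory Defs
  imports Complex_Main "HOL-Library.Tree"
begin

text \<open>A pairing heap is stored in its binary view (leftmost-child / right-sibling).
  Each node carries a pair (identity, key); identities let decrease-key refer to a node.
  A heap is either Leaf (empty) or a Node whose right subtree is Leaf (the root has no siblings).\<close>

type_synonym node = "nat \<times> real"
type_synonym heap = "node tree"

definition nid :: "node \<Rightarrow> nat" where "nid a = fst a"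
definition key :: "node \<Rightarrow> real" where "key a = snd a"

fun link :: "heap \<Rightarrow> heap \<Rightarrow> heap" where
  "link Leaf t = t"
| "link t Leaf = t"
| "link (Node l1 a1 r1) (Node l2 a2 r2) =
     (if key a1 \<le> key a2 then Node (Node l2 a2 l1) a1 Leaf
      else Node (Node l1 a1 l2) a2 Leaf)"

text \<open>The list of general-view children, given the binary-view left subtree of a node.\<close>
fun children :: "heap \<Rightarrow> heap list" where
  "children Leaf = []"
| "children (Node l a r) = Node l a Leaf # children r"

fun pass1 :: "heap list \<Rightarrow> heap list" where
  "pass1 (t1 # t2 # ts) = link t1 t2 # pass1 ts"
| "pass1 ts = ts"

fun pass2 :: "heap list \<Rightarrow> heap" where
  "pass2 [] = Leaf"
| "pass2 [t] = t"
| "pass2 (t # ts) = link t (pass2 ts)"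

fun del_min :: "heap \<Rightarrow> heap" where
  "del_min Leaf = Leaf"
| "del_min (Node l a r) = pass2 (pass1 (children l))"

definition insert_heap :: "nat \<Rightarrow> real \<Rightarrow> heap \<Rightarrow> heap" where
  "insert_heap i k h = link h (Node Leaf (i, k) Leaf)"

text \<open>cut i t: removes the node with identity i together with its general-view subtree
  (its binary-view left subtree) from t; returns the remaining tree and the removed
  subtree as a root (Leaf if i does not occur).\<close>
fun cut :: "nat \<Rightarrow> heap \<Rightarrow> heap \<times> heap" where
  "cut i Leaf = (Leaf, Leaf)"
| "cut i (Node l a r) =
     (if nid a = i then (r, Node l a Leaf)
      else (case cut i l of (l', s1) \<Rightarrow>
             (case cut i r of (r', s2) \<Rightarrow>
               (Node l' a r', if s1 = Leaf then s2 else s1))))"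

fun set_root_key :: "real \<Rightarrow> heap \<Rightarrow> heap" where
  "set_root_key y Leaf = Leaf"
| "set_root_key y (Node l a r) = Node l (nid a, y) r"

definition decrease_key :: "nat \<Rightarrow> real \<Rightarrow> heap \<Rightarrow> heap" where
  "decrease_key i y h =
     (case h of Leaf \<Rightarrow> Leaf
      | Node l a r \<Rightarrow>
          if nid a = i then Node l (i, y) r
          else (case cut i h of (h', s) \<Rightarrow> link h' (set_root_key y s)))"

text \<open>Actual cost of decrease-key: 1 plus the number of pairings (one pairing iff
  the node is not the root).\<close>
definition decrease_key_cost :: "nat \<Rightarrow> heap \<Rightarrow> real" where
  "decrease_key_cost i h =
     (case h of Leaf \<Rightarrow> 1 | Node l a r \<Rightarrow> if nid a = i then 1 else 2)"

datatype heap_op = Insert nat real | GetMin | DeleteMin | DecreaseKey nat real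

definition ids :: "heap \<Rightarrow> nat set" where "ids h = nid ` set_tree h"

fun valid_op :: "heap_op \<Rightarrow> heap \<Rightarrow> bool" where
  "valid_op (Insert i k) h = (i \<notin> ids h)"
| "valid_op GetMin h = (h \<noteq> Leaf)"
| "valid_op DeleteMin h = (h \<noteq> Leaf)"
| "valid_op (DecreaseKey i y) h = (\<exists>a \<in> set_tree h. nid a = i \<and> y < key a)"

fun exec_op :: "heap_op \<Rightarrow> heap \<Rightarrow> heap" where
  "exec_op (Insert i k) h = insert_heap i k h"
| "exec_op GetMin h = h"
| "exec_op DeleteMin h = del_min h"
| "exec_op (DecreaseKey i y) h = decrease_key i y h"

definition sticky_update :: "nat \<Rightarrow> real \<Rightarrow> real" where
  "sticky_update n N =
     (let N1 = (if real n \<ge> 2 * N then 2 * N else N)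
      in if real n \<le> N1 / 2 then N1 / 2 else N1)"

definition step :: "heap \<times> real \<Rightarrow> heap_op \<Rightarrow> heap \<times> real" where
  "step s op = (let h' = exec_op op (fst s) in (h', sticky_update (size h') (snd s)))"

inductive reachable :: "heap \<times> real \<Rightarrow> bool" where
  init: "reachable (Leaf, 1)"
| step: "reachable (h, N) \<Longrightarrow> valid_op op h \<Longrightarrow> reachable (step (h, N) op)"

definition large :: "real \<Rightarrow> heap \<Rightarrow> bool" where
  "large N t = (case t of Leaf \<Rightarrow> False
     | Node l a r \<Rightarrow> real (size l) > log 2 N \<and> real (size r) > log 2 N)"

definition node_pot :: "real \<Rightarrow> heap \<Rightarrow> real" where
  "node_pot N t = (case t of Leaf \<Rightarrow> 0
     | Node l a r \<Rightarrow>
        (let g = log 2 N; L = real (size l); R = real (size r); s = real (size t) in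
         if L > g \<and> R > g then 400 + 100 * log 2 s
         else if L \<le> g \<and> g < R then 400 + 100 * (L / g) * log 2 s
         else if R \<le> g \<and> g < L then 400 + 100 * (R / g) * log 2 s
         else 0))"

fun sum_node_pot :: "real \<Rightarrow> heap \<Rightarrow> real" where
  "sum_node_pot N Leaf = 0"
| "sum_node_pot N (Node l a r) = node_pot N (Node l a r) + sum_node_pot N l + sum_node_pot N r"

fun sum_edge_pot :: "real \<Rightarrow> heap \<Rightarrow> real" where
  "sum_edge_pot N Leaf = 0"
| "sum_edge_pot N (Node l a r) =
     (if large N (Node l a r) \<and> large N r then -7 else 0) + sum_edge_pot N l + sum_edge_pot N r"

definition Phi :: "real \<Rightarrow> heap \<Rightarrow> real" where
  "Phi N h = 900 * \<bar>N - real (size h)\<bar> + sum_node_pot N h + sum_edge_pot N h"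

end

theory Submission
  imports Defs "HOL-Library.Multiset"
begin


definition rl :: "heap \<Rightarrow> bool" where "rl t = (case t of Leaf \<Rightarrow> True | Node l a r \<Rightarrow> r = Leaf)"

definition ms :: "heap \<Rightarrow> node multiset" where "ms t = mset (inorder t)"

lemma ms_Node[simp]: "ms (Node l a r) = ms l + {#a#} + ms r" by (simp add: ms_def)
lemma ms_Leaf[simp]: "ms Leaf = {#}" by (simp add: ms_def)
lemma size_ms: "size t = size (ms t)" by (simp add: ms_def flip: length_inorder)

lemma link_ms: "rl t1 \<Longrightarrow> rl t2 \<Longrightarrow> ms (link t1 t2) = ms t1 + ms t2 \<and> rl (link t1 t2)"
  by (cases "(t1,t2)" rule: link.cases) (auto simp: rl_def)

lemma children_ms: "(\<forall>t\<in>set (children l). rl t) \<and> sum_list (map ms (children l)) = ms l"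
  by (induction l) (auto simp: rl_def)

lemma pass1_ms: "\<forall>t\<in>set ts. rl t \<Longrightarrow> (\<forall>t\<in>set (pass1 ts). rl t) \<and> sum_list (map ms (pass1 ts)) = sum_list (map ms ts)"
  by (induction ts rule: pass1.induct) (auto simp: link_ms)

lemma rl_Leaf[simp]: "rl Leaf" by (simp add: rl_def)

lemma pass2_ms: "\<forall>t\<in>set ts. rl t \<Longrightarrow> rl (pass2 ts) \<and> ms (pass2 ts) = sum_list (map ms ts)"
  by (induction ts rule: pass2.induct) (auto simp: link_ms)

lemma del_min_ms: "ms (del_min (Node l a Leaf)) = ms l \<and> rl (del_min (Node l a Leaf))"
  using pass2_ms[OF conjunct1[OF pass1_ms[OF conjunct1[OF children_ms]]]] pass1_ms[OF conjunct1[OF children_ms]] children_ms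
  by simp

definition dist :: "heap \<Rightarrow> bool" where "dist t = distinct (map nid (inorder t))"

lemma dist_ms: "dist t = (\<forall>x. count (image_mset nid (ms t)) x \<le> 1)"
  unfolding dist_def ms_def mset_map[symmetric]
  by (metis count_mset_0_iff distinct_count_atmost_1 le_SucE le_zero_eq linorder_le_cases nat_le_linear One_nat_def le_refl)

lemma ids_ms: "ids t = set_mset (image_mset nid (ms t))"
  by (simp add: ids_def ms_def)

lemma cut_notin: "i \<notin> ids t \<Longrightarrow> cut i t = (t, Leaf)"
  by (induction t) (simp_all add: ids_def image_Un)



definition npf :: "real \<Rightarrow> real \<Rightarrow> real \<Rightarrow> real" where
 "npf g L R = (let s = L + R + 1 in
         if L > g \<and> R > g then 400 + 100 * log 2 s
         else if L \<le> g \<and> g < R then 400 + 100 * (L / g) * log 2 s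
         else if R \<le> g \<and> g < L then 400 + 100 * (R / g) * log 2 s
         else 0)"

lemma node_pot_npf: "node_pot N (Node l a r) = npf (log 2 N) (size l) (size r)"
  by (simp add: node_pot_def npf_def Let_def algebra_simps)

lemma npf_sym: "npf g L R = npf g R L"
  unfolding npf_def Let_def by (auto simp: algebra_simps)

lemma frac_le: fixes x L g :: real assumes "0 \<le> x" "0 \<le> L" "L \<le> g" shows "L / g * x \<le> x"
proof (cases "g = 0")
  case True then show ?thesis using assms by simp
next
  case False then have "g > 0" using assms by simp
  then have "L / g \<le> 1" "0 \<le> L / g" using assms by auto
  then show ?thesis using assms(1) mult_left_le_one_le[of x "L/g"] by blast
qed

lemma frac_nonneg: fixes x L g :: real assumes "0 \<le> x" "0 \<le> L" "L \<le> g" shows "0 \<le> L / g * x"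
  using assms by simp

lemma frac_mono: fixes x y L L' g :: real assumes "0 \<le> x" "x \<le> y" "0 \<le> L'" "L' \<le> L" "L \<le> g" shows "L' / g * x \<le> L / g * y"
proof (cases "g = 0")
  case True then show ?thesis by simp
next
  case False then have g: "g > 0" using assms by simp
  then have "L' / g \<le> L / g" "0 \<le> L' / g" using assms by (auto simp: divide_right_mono)
  then show ?thesis using assms(1,2) by (meson mult_mono order_trans)
qed

lemma npf_nonneg: assumes "0 \<le> L" "0 \<le> R" shows "0 \<le> npf g L R"
proof -
  have lg: "0 \<le> log 2 (L + R + 1)" using assms by simp
  have "L \<le> g \<Longrightarrow> 0 \<le> L / g * log 2 (L + R + 1)" using lg assms frac_nonneg by blast
  moreover have "R \<le> g \<Longrightarrow> 0 \<le> R / g * log 2 (L + R + 1)" using lg assms frac_nonneg by blast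
  ultimately show ?thesis unfolding npf_def Let_def mult.assoc
    using lg by (smt (verit))
qed

lemma npf_le: assumes "0 \<le> L" "0 \<le> R" shows "npf g L R \<le> 400 + 100 * log 2 (L + R + 1)"
proof -
  have lg: "0 \<le> log 2 (L + R + 1)" using assms by simp
  have "L \<le> g \<Longrightarrow> L / g * log 2 (L + R + 1) \<le> log 2 (L + R + 1)" using lg assms frac_le by blast
  moreover have "R \<le> g \<Longrightarrow> R / g * log 2 (L + R + 1) \<le> log 2 (L + R + 1)" using lg assms frac_le by blast
  ultimately show ?thesis unfolding npf_def Let_def mult.assoc
    using lg by (smt (verit))
qed

lemma npf_mono: assumes "0 \<le> L'" "L' \<le> L" "0 \<le> R" shows "npf g L' R \<le> npf g L R"
proof -
  have lg: "0 \<le> log 2 (L' + R + 1)" using assms by simp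
  have lgm: "log 2 (L' + R + 1) \<le> log 2 (L + R + 1)" using assms by simp
  have m1: "L \<le> g \<Longrightarrow> L' / g * log 2 (L' + R + 1) \<le> L / g * log 2 (L + R + 1)"
    using frac_mono[OF lg lgm assms(1,2)] by blast
  have m2: "L' \<le> g \<Longrightarrow> L' / g * log 2 (L' + R + 1) \<le> log 2 (L + R + 1)"
    using frac_le[OF lg assms(1)] lgm by fastforce
  have m3: "R \<le> g \<Longrightarrow> 0 \<le> R / g * log 2 (L' + R + 1)" using assms lg frac_nonneg by blast
  have m4: "R \<le> g \<Longrightarrow> R / g * log 2 (L' + R + 1) \<le> R / g * log 2 (L + R + 1)"
    using frac_mono[OF lg lgm assms(3) order_refl] by blast
  have m5: "0 \<le> log 2 (L + R + 1)" using assms by simp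
  show ?thesis unfolding npf_def Let_def mult.assoc
    using assms lg lgm m1 m2 m3 m4 m5 by (smt (verit))
qed



lemma ids_Node[simp]: "ids (Node l a r) = ids l \<union> {nid a} \<union> ids r"
  by (auto simp: ids_def)
lemma ids_Leaf[simp]: "ids Leaf = {}" by (simp add: ids_def)

lemma ids_set: "ids t = set (map nid (inorder t))" by (simp add: ids_def)

lemma dist_Node: "dist (Node l a r) \<Longrightarrow> dist l \<and> dist r \<and> nid a \<notin> ids l \<and> nid a \<notin> ids r \<and> ids l \<inter> ids r = {}"
  by (auto simp: dist_def ids_set)

lemma cut_found: "dist t \<Longrightarrow> i \<in> ids t \<Longrightarrow> cut i t = (t', s) \<Longrightarrow>
   (\<exists>lx b. s = Node lx b Leaf \<and> nid b = i) \<and> ms t = ms t' + ms s"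
proof (induction t arbitrary: t' s)
  case Leaf then show ?case by simp
next
  case (Node l a r)
  note d = dist_Node[OF Node.prems(1)]
  show ?case
  proof (cases "nid a = i")
    case True then show ?thesis using Node.prems by (auto simp del: prod.collapse) (metis prod.collapse)
  next
    case False
    then have "i \<in> ids l \<or> i \<in> ids r" using Node.prems by auto
    then show ?thesis
    proof
      assume il: "i \<in> ids l"
      then have "i \<notin> ids r" using d by blast
      then have cr: "cut i r = (r, Leaf)" by (rule cut_notin)
      obtain l' s1 where cl: "cut i l = (l', s1)" by fastforce
      from Node.IH(1)[OF conjunct1[OF d] il cl] obtain lx b where
        s1: "s1 = Node lx b Leaf" "nid b = i" "ms l = ms l' + ms s1" by blast
      then have "t' = Node l' a r" "s = s1" using Node.prems(3) False cl cr by auto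
      then show ?thesis using s1 by auto
    next
      assume ir: "i \<in> ids r"
      then have "i \<notin> ids l" using d by blast
      then have cl: "cut i l = (l, Leaf)" by (rule cut_notin)
      obtain r' s2 where cr: "cut i r = (r', s2)" by fastforce
      from Node.IH(2)[OF conjunct1[OF conjunct2[OF d]] ir cr] obtain lx b where
        s2: "s2 = Node lx b Leaf" "nid b = i" "ms r = ms r' + ms s2" by blast
      then have "t' = Node l a r'" "s = s2" using Node.prems(3) False cl cr by auto
      then show ?thesis using s2 by auto
    qed
  qed
qed

lemma cut_size: "dist t \<Longrightarrow> i \<in> ids t \<Longrightarrow> cut i t = (t', s) \<Longrightarrow> size t = size t' + size s"
  using cut_found[of t i t' s] by (simp add: size_ms)

definition P :: "real \<Rightarrow> heap \<Rightarrow> real" where "P N t = sum_node_pot N t + sum_edge_pot N t"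

lemma large_Node: "large N (Node l a r) = (real (size l) > log 2 N \<and> real (size r) > log 2 N)"
  by (simp add: large_def)

lemma np_nonneg: "0 \<le> node_pot N t"
proof (cases t)
  case Leaf then show ?thesis by (simp add: node_pot_def)
next
  case (Node l a r) then show ?thesis by (simp only: node_pot_npf) (simp add: npf_nonneg)
qed

lemma np_le: "node_pot N (Node l a r) \<le> 400 + 100 * log 2 (real (size (Node l a r)))"
  using npf_le[of "real (size l)" "real (size r)" "log 2 N"] by (simp add: node_pot_npf algebra_simps)

lemma np_mono_l: "size l' \<le> size l \<Longrightarrow> node_pot N (Node l' a r) \<le> node_pot N (Node l b r)"
  by (simp add: node_pot_npf npf_mono)

lemma np_mono_r: "size r' \<le> size r \<Longrightarrow> node_pot N (Node l a r') \<le> node_pot N (Node l b r)"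
  using npf_mono[of "real (size r')" "real (size r)" "real (size l)" "log 2 N"]
  by (simp add: node_pot_npf npf_sym[of _ "real (size l)"])

lemma P_Node: "P N (Node l a r) = node_pot N (Node l a r) + (if large N (Node l a r) \<and> large N r then -7 else 0) + P N l + P N r"
  by (simp add: P_def)

lemma P_Node_Leaf: "P N (Node l a Leaf) = node_pot N (Node l a Leaf) + P N l"
  by (simp add: P_def large_def)



lemma cut_pot: "dist t \<Longrightarrow> i \<in> ids t \<Longrightarrow> cut i t = (t', s) \<Longrightarrow>
  P N t' + P N s - P N t + (if large N t \<and> \<not> large N t' then 7 else 0)
   \<le> node_pot N s + 14 + (if real (size t) > log 2 N + real (size s) then 14 else 0)"
proof (induction t arbitrary: t' s)
  case Leaf then show ?case by simp
next
  case (Node l a r)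
  note d = dist_Node[OF Node.prems(1)]
  define g where "g = log 2 N"
  show ?case
  proof (cases "nid a = i")
    case True
    then have ts: "t' = r" "s = Node l a Leaf" using Node.prems by auto
    have "P N s = node_pot N s + P N l" using ts P_Node_Leaf by simp
    moreover have "P N (Node l a r) \<ge> - 7 + P N l + P N r" using np_nonneg[of N "Node l a r"]
      by (simp add: P_Node)
    ultimately show ?thesis using ts by auto
  next
    case False
    then have "i \<in> ids l \<or> i \<in> ids r" using Node.prems by auto
    then show ?thesis
    proof
      assume il: "i \<in> ids l"
      then have "i \<notin> ids r" using d by blast
      then have cr: "cut i r = (r, Leaf)" by (rule cut_notin)
      obtain l' s1 where cl: "cut i l = (l', s1)" by fastforce
      then have ts: "t' = Node l' a r" "s = s1" using Node.prems(3) False cl cr by auto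
      have IH: "P N l' + P N s - P N l + (if large N l \<and> \<not> large N l' then 7 else 0)
         \<le> node_pot N s + 14 + (if real (size l) > log 2 N + real (size s) then 14 else 0)"
        using Node.IH(1)[OF conjunct1[OF d] il cl] ts by simp
      have sz: "size l = size l' + size s" using cut_size[OF conjunct1[OF d] il cl] ts by simp
      have np: "node_pot N t' \<le> node_pot N (Node l a r)" using ts sz by (simp add: np_mono_l)
      have Pt': "P N t' = node_pot N t' + (if large N t' \<and> large N r then -7 else 0) + P N l' + P N r"
        using ts P_Node by simp
      have Pt: "P N (Node l a r) = node_pot N (Node l a r) + (if large N (Node l a r) \<and> large N r then -7 else 0) + P N l + P N r"
        using P_Node by simp
      have tr: "large N (Node l a r) \<and> \<not> large N t' \<Longrightarrow>
          real (size l) \<le> log 2 N + real (size s) \<and> real (size (Node l a r)) > log 2 N + real (size s)"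
        using ts sz by (auto simp: large_Node)
      have mono: "real (size l) > log 2 N + real (size s) \<Longrightarrow> real (size (Node l a r)) > log 2 N + real (size s)"
        by simp
      show ?thesis using IH np Pt' Pt tr mono
        by (smt (verit))
    next
      assume ir: "i \<in> ids r"
      then have "i \<notin> ids l" using d by blast
      then have cl: "cut i l = (l, Leaf)" by (rule cut_notin)
      obtain r' s2 where cr: "cut i r = (r', s2)" by fastforce
      then have ts: "t' = Node l a r'" "s = s2" using Node.prems(3) False cl cr by auto
      have IH: "P N r' + P N s - P N r + (if large N r \<and> \<not> large N r' then 7 else 0)
         \<le> node_pot N s + 14 + (if real (size r) > log 2 N + real (size s) then 14 else 0)"
        using Node.IH(2)[OF conjunct1[OF conjunct2[OF d]] ir cr] ts by simp
      have sz: "size r = size r' + size s" using cut_size[OF conjunct1[OF conjunct2[OF d]] ir cr] ts by simp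
      have np: "node_pot N t' \<le> node_pot N (Node l a r)" using ts sz by (simp add: np_mono_r)
      have Pt': "P N t' = node_pot N t' + (if large N t' \<and> large N r' then -7 else 0) + P N l + P N r'"
        using ts P_Node by simp
      have Pt: "P N (Node l a r) = node_pot N (Node l a r) + (if large N (Node l a r) \<and> large N r then -7 else 0) + P N l + P N r"
        using P_Node by simp
      have tr: "large N (Node l a r) \<and> \<not> large N t' \<Longrightarrow>
          real (size r) \<le> log 2 N + real (size s) \<and> real (size (Node l a r)) > log 2 N + real (size s)"
        using ts sz by (auto simp: large_Node)
      have mono: "real (size r) > log 2 N + real (size s) \<Longrightarrow> real (size (Node l a r)) > log 2 N + real (size s)"
        by simp
      show ?thesis using IH np Pt' Pt tr mono
        by (smt (verit))
    qed
  qed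
qed



definition inv :: "heap \<times> real \<Rightarrow> bool" where
 "inv s = (rl (fst s) \<and> dist (fst s) \<and>
    ((size (fst s) = 0 \<and> 1/4 < snd s \<and> snd s \<le> 1) \<or>
     (size (fst s) \<ge> 1 \<and> snd s / 2 < real (size (fst s)) \<and> real (size (fst s)) < 2 * snd s)))"

lemma rl_cases: "rl h \<Longrightarrow> h \<noteq> Leaf \<Longrightarrow> \<exists>l a. h = Node l a Leaf"
  by (cases h) (auto simp: rl_def)

lemma dist_im: "image_mset nid (ms h') = image_mset nid (ms h) \<Longrightarrow> dist h' = dist h"
  by (simp add: dist_ms)

lemma size_im: "image_mset nid (ms h') = image_mset nid (ms h) \<Longrightarrow> size h' = size h"
  by (metis size_ms size_image_mset)

lemma dk_ms: assumes "rl h" "dist h" "i \<in> ids h"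
  shows "image_mset nid (ms (decrease_key i y h)) = image_mset nid (ms h) \<and> rl (decrease_key i y h)"
proof -
  obtain l a where h: "h = Node l a Leaf" using rl_cases assms by fastforce
  show ?thesis
  proof (cases "nid a = i")
    case True then show ?thesis using h by (simp add: decrease_key_def nid_def rl_def)
  next
    case False
    obtain h' s where c: "cut i h = (h', s)" by fastforce
    from cut_found[OF assms(2,3) c] obtain lx b where
      s: "s = Node lx b Leaf" "nid b = i" "ms h = ms h' + ms s" by blast
    obtain l' s1 where cl: "cut i l = (l', s1)" by fastforce
    have h': "h' = Node l' a Leaf" using c cl h False by (auto split: if_splits)
    have dk: "decrease_key i y h = link h' (Node lx (i, y) Leaf)"
      using h False c s by (simp add: decrease_key_def)
    have "rl h'" "rl (Node lx (i, y) Leaf)" using h' by (auto simp: rl_def)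
    from link_ms[OF this] have "ms (decrease_key i y h) = ms h' + ms (Node lx (i, y) Leaf)"
        "rl (decrease_key i y h)" using dk by auto
    then show ?thesis using s by (simp add: nid_def)
  qed
qed

lemma sticky_id: "1 \<le> n \<Longrightarrow> N / 2 < real n \<Longrightarrow> real n < 2 * N \<Longrightarrow> sticky_update n N = N"
  by (simp add: sticky_update_def Let_def)

lemma inv_step: assumes "inv (h, N)" "valid_op op h" shows "inv (step (h, N) op)"
proof -
  have rl: "rl h" and di: "dist h" and sz: "(size h = 0 \<and> 1/4 < N \<and> N \<le> 1) \<or>
     (size h \<ge> 1 \<and> N / 2 < real (size h) \<and> real (size h) < 2 * N)" using assms(1) by (auto simp: inv_def)
  define h' where "h' = exec_op op h"
  have st: "step (h, N) op = (h', sticky_update (size h') N)" by (simp add: step_def h'_def Let_def)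
  have key: "rl h' \<and> dist h' \<and> (size h' = size h \<or> size h' = size h + 1 \<or> size h' + 1 = size h)
     \<and> (size h' = 0 \<longrightarrow> size h = 1) \<and> (h = Leaf \<longrightarrow> size h' = 1)"
  proof (cases op)
    case (Insert i k)
    have "rl (Node Leaf (i,k) Leaf)" by (simp add: rl_def)
    from link_ms[OF rl this] have m: "ms h' = ms h + {#(i,k)#}" "rl h'"
      using Insert h'_def by (auto simp: insert_heap_def)
    have ni: "i \<notin> ids h" using assms(2) Insert by simp
    have c0: "count (image_mset nid (ms h)) i = 0" using ni unfolding ids_ms by (simp only: count_eq_zero_iff) simp
    have "dist h'" using di c0 m unfolding dist_ms by (auto simp: nid_def)
    moreover have "size h' = size h + 1" using m by (simp add: size_ms)
    ultimately show ?thesis using m by simp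
  next
    case GetMin then show ?thesis using rl di h'_def assms(2) by auto
  next
    case DeleteMin
    obtain l a where h: "h = Node l a Leaf" using rl_cases rl assms(2) DeleteMin by fastforce
    have m: "ms h' = ms l" "rl h'" using del_min_ms[of l a] h h'_def DeleteMin by auto
    have "dist h'" using di m h unfolding dist_ms
      by (metis ms_Node image_mset_union count_union le_add1 order_trans add.commute)
    moreover have "size h' + 1 = size h" using m h by (simp add: size_ms)
    ultimately show ?thesis using m h by auto
  next
    case (DecreaseKey i y)
    have "i \<in> ids h" using assms(2) DecreaseKey by (auto simp: ids_def)
    from dk_ms[OF rl di this] have "image_mset nid (ms h') = image_mset nid (ms h)" "rl h'"
      using DecreaseKey h'_def by auto
    moreover have "h \<noteq> Leaf" using \<open>i \<in> ids h\<close> by auto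
    ultimately show ?thesis using dist_im[of h' h] size_im[of h' h] di by auto
  qed
  have p1: "(size h \<ge> 1) = (h \<noteq> Leaf)" "(size h' \<ge> 1) = (h' \<noteq> Leaf)"
    by (cases h; simp) (cases h'; simp)
  show ?thesis
  proof (cases "h = Leaf")
    case True
    then show ?thesis unfolding st inv_def fst_conv snd_conv
      using key sz p1 unfolding sticky_update_def Let_def by (auto split: if_splits)
  next
    case False
    then have p2: "real (size h) \<ge> 1" by (cases h) auto
    have "size h \<noteq> 0" using False by simp
    then have "real (size h) < 2 * N" using sz by auto
    then have p3: "N > 1/2" using p2 by linarith
    show ?thesis unfolding st inv_def fst_conv snd_conv
      using key sz p1 p2 p3 False unfolding sticky_update_def Let_def by (auto split: if_splits)
  qed
qed

lemma reachable_inv: "reachable s \<Longrightarrow> inv s"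
proof (induction rule: reachable.induct)
  case init then show ?case by (simp add: inv_def rl_def dist_def)
next
  case (step h N op) then show ?case by (simp add: inv_step)
qed



lemma P_two: "P N (Node (Node x c z) d Leaf) \<le> 800 + 200 * log 2 (real (size (Node (Node x c z) d Leaf))) + P N x + P N z"
proof -
  let ?I = "Node x c z" and ?T = "Node (Node x c z) d Leaf"
  have "P N ?T = node_pot N ?T + P N ?I" by (rule P_Node_Leaf)
  moreover have "P N ?I \<le> node_pot N ?I + P N x + P N z" by (simp add: P_Node)
  moreover have "node_pot N ?T \<le> 400 + 100 * log 2 (real (size ?T))" by (rule np_le)
  moreover have "node_pot N ?I \<le> 400 + 100 * log 2 (real (size ?I))" by (rule np_le)
  moreover have "log 2 (real (size ?I)) \<le> log 2 (real (size ?T))" by simp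
  ultimately show ?thesis by linarith
qed

theorem lemma4:
  "\<exists>c::real. \<forall>h N i y.
     reachable (h, N) \<longrightarrow> valid_op (DecreaseKey i y) h \<longrightarrow>
     decrease_key_cost i h + Phi (snd (step (h, N) (DecreaseKey i y))) (fst (step (h, N) (DecreaseKey i y)))
       - Phi N h \<le> c * max 1 (log 2 (real (size h)))"
proof (intro exI[of _ 1030] allI impI)
  fix h N i y
  assume r: "reachable (h, N)" and v: "valid_op (DecreaseKey i y) h"
  have iv: "inv (h, N)" using r by (rule reachable_inv)
  have rl: "rl h" and di: "dist h" using iv by (auto simp: inv_def)
  have ii: "i \<in> ids h" using v by (auto simp: ids_def)
  then have hne: "h \<noteq> Leaf" by auto
  obtain l a where h: "h = Node l a Leaf" using rl_cases[OF rl hne] by blast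
  have szN: "N / 2 < real (size h)" "real (size h) < 2 * N" "1 \<le> size h" using iv h by (auto simp: inv_def)
  define h' where "h' = decrease_key i y h"
  from dk_ms[OF rl di ii] have "size h' = size h" using size_im h'_def by blast
  then have st: "step (h, N) (DecreaseKey i y) = (h', N)"
    using sticky_id[OF szN(3) szN(1,2)] by (simp add: step_def h'_def Let_def)
  define lg where "lg = log 2 (real (size h))"
  have lg0: "0 \<le> lg" using szN(3) by (simp add: lg_def)
  have PhiE: "Phi N h' - Phi N h = P N h' - P N h"
    using \<open>size h' = size h\<close> by (simp add: Phi_def P_def)
  have main: "decrease_key_cost i h + (P N h' - P N h) \<le> 830 + 200 * lg"
  proof (cases "nid a = i")
    case True
    then have "h' = Node l (i, y) Leaf" using h h'_def by (simp add: decrease_key_def)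
    then have "P N h' = P N h" using h by (simp add: P_Node_Leaf node_pot_npf)
    then show ?thesis using True h lg0 by (simp add: decrease_key_cost_def)
  next
    case False
    have cost: "decrease_key_cost i h = 2" using False h by (simp add: decrease_key_cost_def)
    have il: "i \<in> ids l" using ii h False by auto
    have dl: "dist l" using dist_Node[of l a Leaf] di h by blast
    obtain l' s1 where cl: "cut i l = (l', s1)" by fastforce
    from cut_found[OF dl il cl] obtain lx b where s1: "s1 = Node lx b Leaf" "nid b = i" by blast
    have ch: "cut i h = (Node l' a Leaf, s1)" using h False cl s1 by simp
    have hd: "h' = link (Node l' a Leaf) (Node lx (i, y) Leaf)"
      using h False ch s1 h'_def by (simp add: decrease_key_def)
    have cp: "P N l' + P N s1 - P N l + (if large N l \<and> \<not> large N l' then 7 else 0)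
       \<le> node_pot N s1 + 14 + (if real (size l) > log 2 N + real (size s1) then 14 else 0)"
      by (rule cut_pot[OF dl il cl])
    have Ps1: "P N s1 = node_pot N s1 + P N lx" using s1 P_Node_Leaf by simp
    have cut28: "P N l' + P N lx - P N l \<le> 28" using cp Ps1 by (smt (verit))
    have Ph: "P N h \<ge> P N l" using h P_Node_Leaf np_nonneg by (metis le_add_same_cancel2)
    have sh: "size h' = size h" by fact
    have Ph': "P N h' \<le> 800 + 200 * lg + P N l' + P N lx"
    proof (cases "key a \<le> key (i, y)")
      case True
      then have eq: "h' = Node (Node lx (i, y) l') a Leaf" using hd by simp
      have "P N h' \<le> 800 + 200 * log 2 (real (size h')) + P N lx + P N l'"
        using P_two[of N lx "(i,y)" l' a] unfolding eq[symmetric] .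
      then show ?thesis using sh lg_def by simp
    next
      case False
      then have eq: "h' = Node (Node l' a lx) (i, y) Leaf" using hd by simp
      have "P N h' \<le> 800 + 200 * log 2 (real (size h')) + P N l' + P N lx"
        using P_two[of N l' a lx "(i,y)"] unfolding eq[symmetric] .
      then show ?thesis using sh lg_def by simp
    qed
    show ?thesis using cost cut28 Ph Ph' by linarith
  qed
  have "830 + 200 * lg \<le> 1030 * max 1 lg" by (simp add: max_def)
  then show "decrease_key_cost i h + Phi (snd (step (h, N) (DecreaseKey i y))) (fst (step (h, N) (DecreaseKey i y)))
       - Phi N h \<le> 1030 * max 1 (log 2 (real (size h)))"
    using main PhiE st lg_def by simp
qed

end
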